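(* Let $p\ge1$, $m\in\mathbb N$, $Q\in\mathcal K_o^{1,m}$, $T\in GL_n(\mathbb R)$, and let $L\subset M_{n,m}$ be compact with positive volume. Then $\Gamma_{Q,p}(T.L)=T.\Gamma_{Q,p}L$.
   Context: $M_{k,l}$: real $k\times l$ matrices with inner product $\langle A,B\rangle=\mathrm{tr}(A^t.B)$, identified with $\mathbb R^{kl}$; $A.B$ is matrix product and $T.L=\{T.x:x\in L\}$; $\mathbb R^n\cong M_{n,1}$, $\mathbb R^m\cong M_{1,m}$. $\mathcal K_o^{1,m}$ = convex bodies in $M_{1,m}$ containing the origin. $h_G(x)=\sup_{y\in G}\langle y,x\rangle$. For compact $L\subset M_{n,m}$ of positive volume, $\Gamma_{Q,p}L$ is the convex body in $M_{n,1}$ with $h_{\Gamma_{Q,p}L}(v)^p=\frac1{\mathrm{vol}_{nm}(L)}\int_Lh_Q(v^t.x)^pdx$. *)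

theory Defs
  imports "HOL-Analysis.Analysis"
begin

text \<open>Matrices in M_{n,m} are rendered as real^'m^'n (n rows indexed by 'n, m columns
indexed by 'm); the Euclidean inner product on this type is tr(A^t B).
M_{n,1} is identified with real^'n and M_{1,m} with real^'m.
For v in R^n and x in M_{n,m}, the row vector v^t.x is  v v* x.\<close>

definition support_fun :: "'a::real_inner set \<Rightarrow> 'a \<Rightarrow> real" where
  "support_fun G x = (SUP y\<in>G. inner y x)"

definition convex_body :: "'a::euclidean_space set \<Rightarrow> bool" where
  "convex_body K \<longleftrightarrow> compact K \<and> convex K \<and> interior K \<noteq> {}"

definition Gamma_supp :: "(real^'m) set \<Rightarrow> real \<Rightarrow> (real^'m^'n) set \<Rightarrow> real^'n \<Rightarrow> real" where
  "Gamma_supp Q p L v =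
     ((1 / measure lebesgue L) * integral L (\<lambda>x. (support_fun Q (v v* x)) powr p)) powr (1 / p)"

definition Gamma :: "(real^'m) set \<Rightarrow> real \<Rightarrow> (real^'m^'n) set \<Rightarrow> (real^'n) set" where
  "Gamma Q p L = {y. \<forall>v. inner y v \<le> Gamma_supp Q p L v}"

end

theory Submission
  imports Defs
begin


locale eiso =
  fixes \<phi> :: "'a::euclidean_space \<Rightarrow> 'b::euclidean_space" and \<psi> :: "'b \<Rightarrow> 'a"
  assumes lin: "linear \<phi>" "linear \<psi>"
    and inv1: "\<And>x. \<psi> (\<phi> x) = x" and inv2: "\<And>y. \<phi> (\<psi> y) = y"
    and inn: "\<And>x y. \<phi> x \<bullet> \<phi> y = x \<bullet> y" and bas: "\<phi> ` Basis = Basis"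
begin

lemma ballB: "(\<forall>c\<in>Basis. P c) \<longleftrightarrow> (\<forall>b\<in>Basis. P (\<phi> b))"
proof -
  have "(\<forall>c\<in>Basis. P c) \<longleftrightarrow> (\<forall>c\<in>\<phi> ` Basis. P c)" by (simp only: bas)
  then show ?thesis by auto
qed

lemma image_cbox: "\<phi> ` cbox u v = cbox (\<phi> u) (\<phi> v)"
proof -
  have key: "x \<in> cbox (\<phi> u) (\<phi> v) \<longleftrightarrow> \<psi> x \<in> cbox u v" for x
  proof -
    have "x \<in> cbox (\<phi> u) (\<phi> v) \<longleftrightarrow> (\<forall>b\<in>Basis. \<phi> u \<bullet> \<phi> b \<le> x \<bullet> \<phi> b \<and> x \<bullet> \<phi> b \<le> \<phi> v \<bullet> \<phi> b)"
      unfolding mem_box using ballB[of "\<lambda>c. \<phi> u \<bullet> c \<le> x \<bullet> c \<and> x \<bullet> c \<le> \<phi> v \<bullet> c"] by simp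
    also have "\<dots> \<longleftrightarrow> \<psi> x \<in> cbox u v"
      unfolding mem_box by (metis inn inv2)
    finally show ?thesis .
  qed
  then show ?thesis
  proof (intro set_eqI iffI)
    fix x assume "x \<in> \<phi> ` cbox u v" then show "x \<in> cbox (\<phi> u) (\<phi> v)" using key inv1 by auto
  next
    fix x assume "x \<in> cbox (\<phi> u) (\<phi> v)" then have "\<psi> x \<in> cbox u v" using key by blast
    then show "x \<in> \<phi> ` cbox u v" using inv2 by (metis image_eqI)
  qed
qed

lemma content_image_cbox: "measure lborel (\<phi> ` cbox u v) = measure lborel (cbox u v)"
proof -
  have ne: "cbox (\<phi> u) (\<phi> v) = {} \<longleftrightarrow> cbox u v = {}"
    using image_cbox by (metis image_is_empty)
  have inj: "inj_on \<phi> Basis" by (metis inj_on_inverseI inv1)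
  have "(\<Prod>c\<in>Basis. \<phi> v \<bullet> c - \<phi> u \<bullet> c) = (\<Prod>b\<in>Basis. \<phi> v \<bullet> \<phi> b - \<phi> u \<bullet> \<phi> b)"
    using prod.reindex[OF inj, of "\<lambda>c. \<phi> v \<bullet> c - \<phi> u \<bullet> c"] bas by (simp add: o_def)
  also have "\<dots> = (\<Prod>b\<in>Basis. v \<bullet> b - u \<bullet> b)" by (simp add: inn)
  finally show ?thesis
    unfolding image_cbox content_cbox_if ne by simp
qed

lemma cont: "continuous (at x) \<phi>"
  using lin(1) by (simp add: linear_continuous_at linear_linear)

end

lemma eiso_sym: "eiso \<phi> \<psi> \<Longrightarrow> eiso \<psi> \<phi>"
proof -
  assume e: "eiso \<phi> \<psi>"
  interpret eiso \<phi> \<psi> by (rule e)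
  show ?thesis
  proof (unfold_locales)
    show "\<psi> x \<bullet> \<psi> y = x \<bullet> y" for x y by (metis inn inv2)
    have "\<psi> ` Basis = \<psi> ` \<phi> ` Basis" by (simp only: bas)
    also have "\<dots> = Basis" by (simp add: image_comp o_def inv1)
    finally show "\<psi> ` Basis = Basis" .
  qed (use lin inv1 inv2 in \<open>auto simp: linear_add linear_scale\<close>)
qed
lemma (in eiso) transfer_has_integral:
  fixes f :: "'a \<Rightarrow> 'c::banach"
  assumes "bounded S" and "(f has_integral I) S"
  shows "((f \<circ> \<psi>) has_integral I) (\<phi> ` S)"
proof -
  interpret s: eiso \<psi> \<phi> by (rule eiso_sym) unfold_locales
  obtain a b where ab: "S \<subseteq> cbox a b" using assms(1) bounded_subset_cbox_symmetric by metis
  let ?g = "\<lambda>x. if x \<in> S then f x else 0"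
  have "(?g has_integral I) (cbox a b)" using assms(2) by (rule has_integral_restrict[OF ab, THEN iffD2])
  then have "((\<lambda>x. ?g (\<psi> x)) has_integral (1/1) *\<^sub>R I) (\<phi> ` cbox a b)"
    apply (rule has_integral_twiddle[where g=\<psi> and h=\<phi> and r=1, rotated -1])
    using s.image_cbox image_cbox s.content_image_cbox s.cont inv1 inv2 by auto
  moreover have "(\<lambda>x. ?g (\<psi> x)) = (\<lambda>x. if x \<in> \<phi> ` S then (f \<circ> \<psi>) x else 0)"
  proof
    fix x show "?g (\<psi> x) = (if x \<in> \<phi> ` S then (f \<circ> \<psi>) x else 0)"
    proof (cases "\<psi> x \<in> S")
      case True then have "x \<in> \<phi> ` S" by (metis inv2 image_eqI)
      then show ?thesis using True by simp
    next
      case False then have "x \<notin> \<phi> ` S" using inv1 by auto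
      then show ?thesis using False by simp
    qed
  qed
  moreover have "\<phi> ` S \<subseteq> \<phi> ` cbox a b" using ab by auto
  moreover have "\<phi> ` cbox a b = \<phi> ` cbox a b" ..
  ultimately show ?thesis using has_integral_restrict[of "\<phi> ` S" "\<phi> ` cbox a b"] by (metis divide_self_if scaleR_one zero_neq_one)
qed

lemma (in eiso) transfer_integral:
  fixes f :: "'a \<Rightarrow> 'c::banach"
  assumes "bounded S"
  shows "integral (\<phi> ` S) (f \<circ> \<psi>) = integral S f"
proof -
  interpret s: eiso \<psi> \<phi> by (rule eiso_sym) unfold_locales
  have b2: "bounded (\<phi> ` S)" using assms lin(1) bounded_linear_image linear_linear by blast
  have S: "\<psi> ` \<phi> ` S = S" by (simp add: image_comp o_def inv1)
  have "(f has_integral I) S \<longleftrightarrow> ((f \<circ> \<psi>) has_integral I) (\<phi> ` S)" for I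
  proof
    assume "((f \<circ> \<psi>) has_integral I) (\<phi> ` S)"
    from s.transfer_has_integral[OF b2 this] show "(f has_integral I) S"
      by (simp add: S o_def inv1)
  qed (rule transfer_has_integral[OF assms])
  then show ?thesis
    by (metis integrable_integral integrable_on_def integral_unique not_integrable_integral)
qed



typedef ('a, 'b) ixt = "UNIV :: ('a \<times> 'b) set" by auto

instance ixt :: (finite, finite) finite
proof
  have "(UNIV :: ('a,'b) ixt set) = Abs_ixt ` UNIV"
    using type_definition.Abs_image[OF type_definition_ixt] by auto
  then show "finite (UNIV :: ('a,'b) ixt set)" by (metis finite finite_imageI)
qed

definition enc :: "('a::finite, 'b::finite) ixt \<Rightarrow> nat" where
  "enc x = to_nat_on (UNIV :: ('a \<times> 'b) set) (Rep_ixt x)"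

lemma inj_enc: "inj enc"
proof
  fix x y :: "('a::finite, 'b::finite) ixt"
  assume "enc x = enc y"
  then have "Rep_ixt x = Rep_ixt y"
    unfolding enc_def by (simp add: countable_finite)
  then show "x = y" by (simp add: Rep_ixt_inject)
qed

instantiation ixt :: (finite, finite) wellorder
begin
definition less_eq_ixt :: "('a,'b) ixt \<Rightarrow> ('a,'b) ixt \<Rightarrow> bool" where "less_eq_ixt x y \<longleftrightarrow> enc x \<le> enc y"
definition less_ixt :: "('a,'b) ixt \<Rightarrow> ('a,'b) ixt \<Rightarrow> bool" where "less_ixt x y \<longleftrightarrow> enc x < enc y"
instance
proof
  fix x y z :: "('a,'b) ixt"
  show "(x < y) = (x \<le> y \<and> \<not> y \<le> x)" unfolding less_eq_ixt_def less_ixt_def by auto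
  show "x \<le> x" unfolding less_eq_ixt_def by auto
  show "x \<le> y \<Longrightarrow> y \<le> z \<Longrightarrow> x \<le> z" unfolding less_eq_ixt_def by auto
  show "x \<le> y \<Longrightarrow> y \<le> x \<Longrightarrow> x = y" unfolding less_eq_ixt_def using inj_enc
    by (metis antisym injD)
  show "x \<le> y \<or> y \<le> x" unfolding less_eq_ixt_def by auto
next
  fix P :: "('a,'b) ixt \<Rightarrow> bool" and a
  assume H: "\<And>x. (\<And>y. y < x \<Longrightarrow> P y) \<Longrightarrow> P x"
  show "P a"
    by (induct a rule: measure_induct_rule[of enc]) (rule H, simp add: less_ixt_def)
qed
end

definition flat :: "real^'m^'n \<Rightarrow> real^('n,'m) ixt" where
  "flat x = (\<chi> k. x $ fst (Rep_ixt k) $ snd (Rep_ixt k))"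

definition unflat :: "real^('n,'m) ixt \<Rightarrow> real^'m^'n" where
  "unflat y = (\<chi> i j. y $ Abs_ixt (i, j))"

lemma flat_unflat: "flat (unflat y) = y"
  by (simp add: flat_def unflat_def vec_eq_iff Rep_ixt_inverse)

lemma unflat_flat: "unflat (flat x) = x"
  by (simp add: flat_def unflat_def vec_eq_iff Abs_ixt_inverse)

lemma linear_flat: "linear flat"
  by (rule linearI) (simp_all add: flat_def vec_eq_iff)

lemma linear_unflat: "linear unflat"
  by (rule linearI) (simp_all add: unflat_def vec_eq_iff)

lemma inner_flat: "flat x \<bullet> flat y = x \<bullet> y"
proof -
  have "flat x \<bullet> flat y = (\<Sum>k\<in>UNIV. x $ fst (Rep_ixt k) $ snd (Rep_ixt k) * y $ fst (Rep_ixt k) $ snd (Rep_ixt k))"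
    by (simp add: inner_vec_def flat_def)
  also have "\<dots> = (\<Sum>ij\<in>UNIV. x $ fst ij $ snd ij * y $ fst ij $ snd ij)"
    by (rule sum.reindex_bij_witness[where j=Rep_ixt and i=Abs_ixt])
       (simp_all add: Rep_ixt_inverse Abs_ixt_inverse)
  also have "\<dots> = (\<Sum>i\<in>UNIV. \<Sum>j\<in>UNIV. x $ i $ j * y $ i $ j)"
    by (simp add: sum.cartesian_product case_prod_beta)
  also have "\<dots> = x \<bullet> y" by (simp add: inner_vec_def)
  finally show ?thesis .
qed

lemma flat_axis: "flat (axis i (axis j 1)) = axis (Abs_ixt (i, j)) 1"
  by (auto simp: flat_def vec_eq_iff axis_def Abs_ixt_inverse Rep_ixt_inverse)

lemma flat_Basis: "flat ` Basis = Basis"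
proof -
  have "flat ` Basis = (\<Union>i. \<Union>j. {flat (axis i (axis j 1))})"
    by (auto simp: Basis_vec_def)
  also have "\<dots> = (\<Union>i. \<Union>j. {axis (Abs_ixt (i, j)) (1::real)})" by (simp add: flat_axis)
  also have "\<dots> = (\<Union>k. {axis k 1})"
    by (auto, metis Rep_ixt_inverse prod.collapse)
  also have "\<dots> = Basis" by (simp add: Basis_vec_def)
  finally show ?thesis .
qed

interpretation fl: eiso flat unflat
  by (intro eiso.intro linear_flat linear_unflat) (simp_all add: linear_flat linear_unflat flat_unflat unflat_flat inner_flat flat_Basis)



lemma integral_eq_by_has_integral:
  assumes "\<And>b. (f has_integral b) S \<longleftrightarrow> (g has_integral b) T"
  shows "integral S f = integral T g"
  by (metis assms integrable_integral integrable_on_def integral_unique not_integrable_integral)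

lemma linear_matmul: "linear (\<lambda>x. (T::real^'n^'n) ** (x::real^'m^'n))"
  by (rule linearI) (simp_all add: matrix_add_ldistrib vec_eq_iff matrix_matrix_mult_def sum_distrib_left algebra_simps sum.distrib)

lemma cov_linear_nonneg:
  fixes G H :: "(real,'k::{finite,wellorder}) vec \<Rightarrow> (real,'k) vec"
  assumes "linear G" "linear H" "\<And>x. H (G x) = x" and g0: "\<And>x. 0 \<le> g x"
  shows "integral (G ` A) g = \<bar>det (matrix G)\<bar> * integral A (\<lambda>x. g (G x))"
proof -
  have "((\<lambda>x. \<bar>det (matrix G)\<bar> * g (G x)) has_integral b) A \<longleftrightarrow> (g has_integral b) (G ` A)" for b
  proof (rule cov_invertible_nonneg_eq[where h=H and h'="\<lambda>_. H"])
    show "(G has_derivative G) (at x within A)" for x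
      using assms(1) by (simp add: linear_imp_has_derivative has_derivative_at_withinI)
    show "(H has_derivative H) (at y within G ` A)" for y
      using assms(2) by (simp add: linear_imp_has_derivative has_derivative_at_withinI)
  qed (use assms in \<open>auto simp: fun_eq_iff\<close>)
  then have "integral (G ` A) g = integral A (\<lambda>x. \<bar>det (matrix G)\<bar> * g (G x))"
    by (intro integral_eq_by_has_integral) auto
  also have "\<dots> = \<bar>det (matrix G)\<bar> * integral A (\<lambda>x. g (G x))"
    using integral_cmul[of A "\<bar>det (matrix G)\<bar>" "\<lambda>x. g (G x)"] by simp
  finally show ?thesis .
qed

lemma cv_matrix:
  fixes T :: "real^'n^'n" and f :: "real^'m^'n \<Rightarrow> real"
  assumes inv: "invertible T" and f0: "\<And>x. 0 \<le> f x" and bS: "bounded S"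
  shows "integral ((\<lambda>x. T ** x) ` S) f
       = \<bar>det (matrix (\<lambda>y. flat (T ** unflat y) :: real^('n,'m) ixt))\<bar> * integral S (\<lambda>x. f (T ** x))"
proof -
  let ?F = "\<lambda>x::real^'m^'n. T ** x"
  let ?G = "\<lambda>y. flat (T ** unflat y) :: real^('n,'m) ixt"
  obtain T' where T': "T ** T' = mat 1" "T' ** T = mat 1" using inv unfolding invertible_def by blast
  let ?H = "\<lambda>y. flat (T' ** unflat y) :: real^('n,'m) ixt"
  have linG: "linear ?G"
    using linear_compose[OF linear_compose[OF linear_unflat linear_matmul] linear_flat] by (simp add: o_def)
  have linH: "linear ?H"
    using linear_compose[OF linear_compose[OF linear_unflat linear_matmul] linear_flat] by (simp add: o_def)
  have HG: "?H (?G y) = y" for y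
    using T' by (simp add: unflat_flat flat_unflat matrix_mul_assoc)
  have bFS: "bounded (?F ` S)"
    using bS linear_matmul bounded_linear_image linear_linear by blast
  have bfS: "bounded (flat ` S)"
    using bS linear_flat bounded_linear_image linear_linear by blast
  have img: "flat ` ?F ` S = ?G ` (flat ` S)"
    by (simp add: image_comp o_def unflat_flat)
  have "integral (?F ` S) f = integral (flat ` ?F ` S) (f \<circ> unflat)"
    using fl.transfer_integral[OF bFS, of f] by simp
  also have "\<dots> = integral (?G ` (flat ` S)) (f \<circ> unflat)" by (simp only: img)
  also have "\<dots> = \<bar>det (matrix ?G)\<bar> * integral (flat ` S) (\<lambda>y. (f \<circ> unflat) (?G y))"
    by (rule cov_linear_nonneg[OF linG linH HG]) (simp add: f0)
  also have "(\<lambda>y. (f \<circ> unflat) (?G y)) = (\<lambda>x. f (T ** x)) \<circ> unflat"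
    by (simp add: fun_eq_iff unflat_flat)
  also have "integral (flat ` S) ((\<lambda>x. f (T ** x)) \<circ> unflat) = integral S (\<lambda>x. f (T ** x))"
    by (rule fl.transfer_integral[OF bS])
  finally show ?thesis .
qed



lemma cv_det_pos:
  fixes T :: "real^'n^'n"
  assumes inv: "invertible T"
  shows "\<bar>det (matrix (\<lambda>y. flat (T ** unflat y) :: real^('n,'m::finite) ixt))\<bar> > 0"
proof -
  let ?G = "\<lambda>y. flat (T ** unflat y) :: real^('n,'m) ixt"
  obtain T' where T': "T ** T' = mat 1" "T' ** T = mat 1" using inv unfolding invertible_def by blast
  let ?H = "\<lambda>y. flat (T' ** unflat y) :: real^('n,'m) ixt"
  have linG: "linear ?G"
    using linear_compose[OF linear_compose[OF linear_unflat linear_matmul] linear_flat] by (simp add: o_def)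
  have HG: "?H (?G y) = y" for y
    using T' by (simp add: unflat_flat flat_unflat matrix_mul_assoc)
  have "inj ?G" by (rule inj_on_inverseI[where g="?H"]) (rule HG)
  then show ?thesis using det_nz_iff_inj[OF linG] by simp
qed

theorem proposition3p3:
  fixes p :: real and Q :: "(real^'m) set" and T :: "real^'n^'n" and L :: "(real^'m^'n) set"
  assumes "p \<ge> 1"
    and "convex_body Q" and "0 \<in> Q"
    and "invertible T"
    and "compact L" and "measure lebesgue L > 0"
  shows "Gamma Q p ((\<lambda>x. T ** x) ` L) = (\<lambda>y. T *v y) ` Gamma Q p L"
proof -
  let ?F = "\<lambda>x::real^'m^'n. T ** x"
  define c where "c = \<bar>det (matrix (\<lambda>y. flat (T ** unflat y) :: real^('n,'m) ixt))\<bar>"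
  have cpos: "c > 0" unfolding c_def by (rule cv_det_pos[OF assms(4)])
  have bL: "bounded L" using assms(5) by (simp add: compact_imp_bounded)
  have cFL: "compact (?F ` L)"
    using assms(5) linear_matmul by (intro compact_continuous_image linear_continuous_on) (simp_all add: linear_linear)
  have mFL: "measure lebesgue (?F ` L) = c * measure lebesgue L"
  proof -
    have "measure lebesgue (?F ` L) = integral (?F ` L) (\<lambda>x. 1::real)"
      using cFL by (simp add: lmeasure_integral lmeasurable_compact)
    also have "\<dots> = c * integral L (\<lambda>x. 1::real)"
      unfolding c_def using cv_matrix[OF assms(4) _ bL, of "\<lambda>x. 1::real"] by simp
    also have "integral L (\<lambda>x. 1::real) = measure lebesgue L"
      using assms(5) by (simp add: lmeasure_integral lmeasurable_compact)
    finally show ?thesis .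
  qed
  have supp: "Gamma_supp Q p (?F ` L) v = Gamma_supp Q p L (v v* T)" for v
  proof -
    have "integral (?F ` L) (\<lambda>x. (support_fun Q (v v* x)) powr p)
        = c * integral L (\<lambda>x. (support_fun Q (v v* (T ** x))) powr p)"
      unfolding c_def by (rule cv_matrix[OF assms(4) _ bL]) simp
    also have "(\<lambda>x. (support_fun Q (v v* (T ** x))) powr p) = (\<lambda>x. (support_fun Q ((v v* T) v* x)) powr p)"
      by (simp add: vector_matrix_mul_assoc)
    finally have I: "integral (?F ` L) (\<lambda>x. (support_fun Q (v v* x)) powr p)
        = c * integral L (\<lambda>x. (support_fun Q ((v v* T) v* x)) powr p)" .
    show ?thesis
      unfolding Gamma_supp_def I mFL using cpos by simp
  qed
  show ?thesis
  proof (intro set_eqI iffI)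
    fix y assume "y \<in> Gamma Q p (?F ` L)"
    then have y: "\<And>v. inner y v \<le> Gamma_supp Q p L (v v* T)"
      unfolding Gamma_def supp by simp
    obtain T' where T': "T ** T' = mat 1" "T' ** T = mat 1" using assms(4) unfolding invertible_def by blast
    define z where "z = T' *v y"
    have yz: "y = T *v z" unfolding z_def by (simp add: matrix_vector_mul_assoc T')
    have "inner z w \<le> Gamma_supp Q p L w" for w
    proof -
      have "w = (w v* T') v* T" by (simp add: vector_matrix_mul_assoc T')
      then have "inner z w = inner (w v* T') y"
        by (metis dot_lmul_matrix inner_commute yz)
      also have "\<dots> \<le> Gamma_supp Q p L w"
        using y[of "w v* T'"] by (simp add: inner_commute vector_matrix_mul_assoc T')
      finally show ?thesis .
    qed
    then have "z \<in> Gamma Q p L" unfolding Gamma_def by simp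
    then show "y \<in> (\<lambda>y. T *v y) ` Gamma Q p L" using yz by blast
  next
    fix y assume "y \<in> (\<lambda>y. T *v y) ` Gamma Q p L"
    then obtain z where z: "z \<in> Gamma Q p L" and yz: "y = T *v z" by blast
    have "inner y v \<le> Gamma_supp Q p L (v v* T)" for v
    proof -
      have "inner y v = inner z (v v* T)"
        by (metis dot_lmul_matrix inner_commute yz)
      then show ?thesis using z unfolding Gamma_def by simp
    qed
    then show "y \<in> Gamma Q p (?F ` L)" unfolding Gamma_def supp by simp
  qed
qed


end
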